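(* Let $(X,d)$ be a compact metric space and $f:X\to X$ continuous. For each $\delta>0$ let $\mathcal D(\delta)=\{D_{i,j}:1\le i\le K,\ 0\le j\le m_i-1\}$ be a family of pairwise disjoint subsets of $CR(f)$ (with $K,m_i$ depending on $\delta$) satisfying: (D1) $CR(f)=\bigsqcup_{i,j}D_{i,j}$ and each $D_{i,j}$ is clopen in $CR(f)$; (D2) setting $D_{i,m_i}=D_{i,0}$, $f(D_{i,j})=D_{i,j+1}$ for all $i,j$; (D3) for any $x,y\in D_{i,j}$ there is $N>0$ such that for every integer $n\ge N$ there is a $\delta$-chain $(x_\eta)_{\eta=0}^k$ of $f$ in $CR(f)$ with $x_0=x$, $x_k=y$ and $k=m_in$. Then for any $x,y\in CR(f)$, $x\sim y$ if and only if for every $\delta>0$, $x$ and $y$ belong to the same member of $\mathcal D(\delta)$.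
   Context: For $\delta>0$, a finite sequence $(x_i)_{i=0}^k$ ($k\ge1$) is a $\delta$-chain of $f$ if $d(f(x_i),x_{i+1})\le\delta$ for $0\le i\le k-1$; it is a $\delta$-cycle if moreover $x_0=x_k$. $CR(f)$ is the set of points $x$ such that for every $\delta>0$ there is a $\delta$-cycle starting and ending at $x$. For $x,y\in CR(f)$, $x\sim y$ iff for every $\delta>0$ there are integers $m>0$, $N>0$ such that for every integer $n\ge N$ there are $\delta$-chains $(x_i)_{i=0}^{mn},(y_i)_{i=0}^{mn}$ of $f$ consisting of points of $CR(f)$ with $x_0=y_{mn}=x$ and $x_{mn}=y_0=y$. (Families satisfying (D1)–(D3) exist for every $\delta>0$.) *)

theory Defs
  imports "HOL-Analysis.Analysis"
begin

text \<open>The compact metric space X is a compact subset S of a metric type; f maps S into S.\<close>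

definition dchain :: "('a::metric_space \<Rightarrow> 'a) \<Rightarrow> real \<Rightarrow> 'a set \<Rightarrow> (nat \<Rightarrow> 'a) \<Rightarrow> nat \<Rightarrow> bool" where
  "dchain f \<delta> A c k \<longleftrightarrow> k \<ge> 1 \<and> (\<forall>i\<le>k. c i \<in> A) \<and> (\<forall>i<k. dist (f (c i)) (c (Suc i)) \<le> \<delta>)"

definition CR :: "'a::metric_space set \<Rightarrow> ('a \<Rightarrow> 'a) \<Rightarrow> 'a set" where
  "CR S f = {x \<in> S. \<forall>\<delta>>0. \<exists>c k. dchain f \<delta> S c k \<and> c 0 = x \<and> c k = x}"

definition cr_equiv :: "'a::metric_space set \<Rightarrow> ('a \<Rightarrow> 'a) \<Rightarrow> 'a \<Rightarrow> 'a \<Rightarrow> bool" where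
  "cr_equiv S f x y \<longleftrightarrow> x \<in> CR S f \<and> y \<in> CR S f \<and>
     (\<forall>\<delta>>0. \<exists>m>0. \<exists>N>0. \<forall>n\<ge>N. \<exists>cx cy.
        dchain f \<delta> (CR S f) cx (m * n) \<and> dchain f \<delta> (CR S f) cy (m * n) \<and>
        cx 0 = x \<and> cx (m * n) = y \<and> cy 0 = y \<and> cy (m * n) = x)"

end

theory Submission
  imports Defs
begin

lemma sep_cc:
  fixes S T :: "'a::metric_space set"
  assumes "compact S" and T: "closed T" "S \<inter> T = {}"
  shows "\<exists>\<delta>>0. \<forall>x\<in>S. \<forall>y\<in>T. \<delta> \<le> dist x y"
proof cases
  assume "S \<noteq> {} \<and> T \<noteq> {}"
  then have "S \<noteq> {}" "T \<noteq> {}" by auto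
  let ?inf = "\<lambda>x. infdist x T"
  have "continuous_on S ?inf"
    by (auto intro!: continuous_at_imp_continuous_on continuous_infdist continuous_ident)
  then obtain x where x: "x \<in> S" "\<forall>y\<in>S. ?inf x \<le> ?inf y"
    using continuous_attains_inf[OF \<open>compact S\<close> \<open>S \<noteq> {}\<close>] by auto
  then have "0 < ?inf x"
    using T \<open>T \<noteq> {}\<close> in_closed_iff_infdist_zero by (auto simp: less_le infdist_nonneg)
  moreover have "\<forall>x'\<in>S. \<forall>y\<in>T. ?inf x \<le> dist x' y"
    using x by (auto intro: order_trans infdist_le)
  ultimately show ?thesis by auto
qed (auto intro!: exI[of _ 1])

lemma CR_closed:
  fixes S :: "'a::metric_space set"
  assumes "compact S" and cont: "continuous_on S f"
  shows "closed (CR S f)"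
proof -
  have sub: "CR S f \<subseteq> S" by (auto simp: CR_def)
  have "closure (CR S f) \<subseteq> CR S f"
  proof
    fix x assume xc: "x \<in> closure (CR S f)"
    have xS: "x \<in> S"
      using closure_mono[OF sub] xc compact_imp_closed[OF assms(1)] closure_closed by blast
    have "\<exists>c k. dchain f \<delta> S c k \<and> c 0 = x \<and> c k = x" if "\<delta> > 0" for \<delta>
    proof -
      obtain e where e: "e > 0" "\<forall>z\<in>S. dist z x < e \<longrightarrow> dist (f z) (f x) < \<delta>/3"
        using cont xS \<open>\<delta>>0\<close> unfolding continuous_on_iff by (metis divide_pos_pos zero_less_numeral)
      obtain z where z: "z \<in> CR S f" "dist z x < min e (\<delta>/3)"
        using xc closure_approachable[of x "CR S f"] e \<open>\<delta>>0\<close> by (metis min_less_iff_conj zero_less_divide_iff zero_less_numeral)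
      have d3: "\<delta>/3 > 0" using \<open>\<delta>>0\<close> by simp
      obtain c k where ck: "dchain f (\<delta>/3) S c k" "c 0 = z" "c k = z"
        using z(1) d3 unfolding CR_def by blast
      define c' where "c' = (\<lambda>i. if i = 0 \<or> i = k then x else c i)"
      have zS: "z \<in> S" using z sub by auto
      have A: "dist (c' i) (c i) \<le> \<delta>/3" if "i \<le> k" for i
        using z ck \<open>\<delta>>0\<close> by (auto simp: c'_def dist_commute)
      have B: "dist (f (c' i)) (f (c i)) \<le> \<delta>/3" if "i \<le> k" for i
        using z ck e zS \<open>\<delta>>0\<close> by (auto simp: c'_def dist_commute less_imp_le)
      have "dchain f \<delta> S c' k"
        unfolding dchain_def
      proof (intro conjI allI impI)
        show "1 \<le> k" using ck by (simp add: dchain_def)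
        fix i assume "i \<le> k" then show "c' i \<in> S" using ck xS by (auto simp: c'_def dchain_def)
      next
        fix i assume ik: "i < k"
        have "dist (f (c' i)) (c' (Suc i)) \<le> dist (f (c' i)) (f (c i)) + dist (f (c i)) (c (Suc i)) + dist (c (Suc i)) (c' (Suc i))"
          by (meson dist_triangle order_trans add_right_mono)
        moreover have "dist (f (c i)) (c (Suc i)) \<le> \<delta>/3" using ck ik by (auto simp: dchain_def)
        moreover have "dist (c (Suc i)) (c' (Suc i)) \<le> \<delta>/3" using A[of "Suc i"] ik by (simp add: dist_commute)
        moreover have "dist (f (c' i)) (f (c i)) \<le> \<delta>/3" using B ik by simp
        ultimately show "dist (f (c' i)) (c' (Suc i)) \<le> \<delta>" by linarith
      qed
      moreover have "c' 0 = x" "c' k = x" by (auto simp: c'_def)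
      ultimately show ?thesis by blast
    qed
    then show "x \<in> CR S f" using xS by (auto simp: CR_def)
  qed
  then show ?thesis using closure_subset_eq by blast
qed

theorem lemma3p2:
  fixes S :: "'a::metric_space set" and f :: "'a \<Rightarrow> 'a"
    and K :: "real \<Rightarrow> nat" and m :: "real \<Rightarrow> nat \<Rightarrow> nat"
    and D :: "real \<Rightarrow> nat \<Rightarrow> nat \<Rightarrow> 'a set"
  assumes "compact S" and "continuous_on S f" and "f ` S \<subseteq> S"
    and m_pos: "\<And>\<delta> i. \<delta> > 0 \<Longrightarrow> 1 \<le> i \<Longrightarrow> i \<le> K \<delta> \<Longrightarrow> m \<delta> i \<ge> 1"
    and disj: "\<And>\<delta> i j i' j'. \<delta> > 0 \<Longrightarrow> 1 \<le> i \<Longrightarrow> i \<le> K \<delta> \<Longrightarrow> j < m \<delta> i \<Longrightarrow>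
        1 \<le> i' \<Longrightarrow> i' \<le> K \<delta> \<Longrightarrow> j' < m \<delta> i' \<Longrightarrow> (i, j) \<noteq> (i', j') \<Longrightarrow>
        D \<delta> i j \<inter> D \<delta> i' j' = {}"
    and D1_cover: "\<And>\<delta>. \<delta> > 0 \<Longrightarrow>
        CR S f = (\<Union>{D \<delta> i j | i j. 1 \<le> i \<and> i \<le> K \<delta> \<and> j < m \<delta> i})"
    and D1_clopen: "\<And>\<delta> i j. \<delta> > 0 \<Longrightarrow> 1 \<le> i \<Longrightarrow> i \<le> K \<delta> \<Longrightarrow> j < m \<delta> i \<Longrightarrow>
        openin (top_of_set (CR S f)) (D \<delta> i j) \<and> closedin (top_of_set (CR S f)) (D \<delta> i j)"
    and D2: "\<And>\<delta> i j. \<delta> > 0 \<Longrightarrow> 1 \<le> i \<Longrightarrow> i \<le> K \<delta> \<Longrightarrow> j < m \<delta> i \<Longrightarrow>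
        f ` (D \<delta> i j) = D \<delta> i (Suc j mod m \<delta> i)"
    and D3: "\<And>\<delta> i j x y. \<delta> > 0 \<Longrightarrow> 1 \<le> i \<Longrightarrow> i \<le> K \<delta> \<Longrightarrow> j < m \<delta> i \<Longrightarrow>
        x \<in> D \<delta> i j \<Longrightarrow> y \<in> D \<delta> i j \<Longrightarrow>
        \<exists>N>0. \<forall>n\<ge>N. \<exists>c. dchain f \<delta> (CR S f) c (m \<delta> i * n) \<and> c 0 = x \<and> c (m \<delta> i * n) = y"
    and "x \<in> CR S f" and "y \<in> CR S f"
  shows "cr_equiv S f x y \<longleftrightarrow>
    (\<forall>\<delta>>0. \<exists>i j. 1 \<le> i \<and> i \<le> K \<delta> \<and> j < m \<delta> i \<and> x \<in> D \<delta> i j \<and> y \<in> D \<delta> i j)"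
proof
  assume ceq: "cr_equiv S f x y"
  show "\<forall>\<delta>>0. \<exists>i j. 1 \<le> i \<and> i \<le> K \<delta> \<and> j < m \<delta> i \<and> x \<in> D \<delta> i j \<and> y \<in> D \<delta> i j"
  proof (intro allI impI)
    fix \<delta> :: real assume dp: "\<delta> > 0"
    obtain i j where ij: "1 \<le> i" "i \<le> K \<delta>" "j < m \<delta> i" "x \<in> D \<delta> i j"
      using D1_cover[OF dp] \<open>x \<in> CR S f\<close> by blast
    define M where "M = m \<delta> i"
    have M1: "M \<ge> 1" using m_pos[OF dp ij(1,2)] M_def by simp
    have crc: "compact (CR S f)"
      proof -
      have "CR S f = S \<inter> CR S f" by (auto simp: CR_def)
      then show ?thesis using CR_closed[OF assms(1,2)] assms(1) compact_Int_closed by metis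
    qed
    have "\<forall>j'<M. \<exists>d>0. \<forall>a\<in>D \<delta> i j'. \<forall>b\<in>CR S f. dist a b < d \<longrightarrow> b \<in> D \<delta> i j'"
    proof (intro allI impI)
      fix j' assume j': "j' < M"
      have co: "openin (top_of_set (CR S f)) (D \<delta> i j')" "closedin (top_of_set (CR S f)) (D \<delta> i j')"
        using D1_clopen[OF dp ij(1,2)] j' M_def by auto
      have Dsub: "D \<delta> i j' \<subseteq> CR S f" using co(2) closedin_imp_subset by blast
      have "closed (D \<delta> i j')" using co(2) CR_closed[OF assms(1,2)] closedin_closed_trans by blast
      then have cD: "compact (D \<delta> i j')" using crc Dsub
        by (metis compact_Int_closed inf.absorb_iff2)
      have "closedin (top_of_set (CR S f)) (CR S f - D \<delta> i j')"
        using co(1) by (simp add: closedin_def Dsub double_diff)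
      then have "closed (CR S f - D \<delta> i j')" using CR_closed[OF assms(1,2)] closedin_closed_trans by blast
      then obtain d where "d > 0" "\<forall>a\<in>D \<delta> i j'. \<forall>b\<in>CR S f - D \<delta> i j'. d \<le> dist a b"
        using sep_cc[OF cD] by blast
      then show "\<exists>d>0. \<forall>a\<in>D \<delta> i j'. \<forall>b\<in>CR S f. dist a b < d \<longrightarrow> b \<in> D \<delta> i j'"
        by (meson DiffI not_le)
    qed
    then obtain d where d: "\<And>j'. j' < M \<Longrightarrow> d j' > 0 \<and> (\<forall>a\<in>D \<delta> i j'. \<forall>b\<in>CR S f. dist a b < d j' \<longrightarrow> b \<in> D \<delta> i j')"
      by (metis (no_types, lifting))
    define \<epsilon> where "\<epsilon> = Min ((\<lambda>j. d j / 2) ` {..<M})"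
    have ne: "{..<M} \<noteq> {}" using M1 lessThan_empty_iff by (metis not_one_le_zero)
    have ep: "\<epsilon> > 0" unfolding \<epsilon>_def using d ne by (subst Min_gr_iff) auto
    have el: "\<epsilon> < d j'" if "j' < M" for j'
    proof -
      have "\<epsilon> \<le> d j' / 2" unfolding \<epsilon>_def using that by (intro Min_le) auto
      then show ?thesis using d[OF that] by linarith
    qed
    have step: "c t \<in> D \<delta> i ((j + t) mod M)" if ch: "dchain f \<epsilon> (CR S f) c k" and c0: "c 0 \<in> D \<delta> i j" and tk: "t \<le> k" for c k t
      using tk
    proof (induction t)
      case 0 then show ?case using c0 ij(3) M_def by simp
    next
      case (Suc t)
      have ct: "c t \<in> D \<delta> i ((j + t) mod M)" using Suc by simp
      have lt: "(j + t) mod M < M" using M1 by simp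
      have "f (c t) \<in> D \<delta> i (Suc ((j + t) mod M) mod M)"
        using D2[OF dp ij(1,2), of "(j + t) mod M"] lt ct M_def by auto
      then have fc: "f (c t) \<in> D \<delta> i ((j + Suc t) mod M)" by (simp add: mod_Suc_eq)
      have "c (Suc t) \<in> CR S f" "dist (f (c t)) (c (Suc t)) \<le> \<epsilon>"
        using ch Suc.prems unfolding dchain_def by auto
      moreover have "(j + Suc t) mod M < M" using M1 by simp
      ultimately show ?case using d el fc by (meson le_less_trans)
    qed
    obtain m0 N where mN: "m0 > 0" "N > 0" "\<forall>n\<ge>N. \<exists>cx cy.
        dchain f \<epsilon> (CR S f) cx (m0 * n) \<and> dchain f \<epsilon> (CR S f) cy (m0 * n) \<and>
        cx 0 = x \<and> cx (m0 * n) = y \<and> cy 0 = y \<and> cy (m0 * n) = x"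
      using ceq ep unfolding cr_equiv_def by blast
    have "N * M \<ge> N" using M1 by simp
    then obtain cx where cx: "dchain f \<epsilon> (CR S f) cx (m0 * (N * M))" "cx 0 = x" "cx (m0 * (N*M)) = y"
      using mN(3) by blast
    have "y \<in> D \<delta> i ((j + m0 * (N * M)) mod M)"
      using step[OF cx(1)] cx ij(4) by fastforce
    moreover have "(j + m0 * (N * M)) mod M = j"
    proof -
      have "m0 * (N * M) = (m0 * N) * M" by simp
      then have "(j + m0 * (N * M)) mod M = j mod M" by (metis mod_mult_self1)
      then show ?thesis using ij(3) M_def by simp
    qed
    ultimately show "\<exists>i j. 1 \<le> i \<and> i \<le> K \<delta> \<and> j < m \<delta> i \<and> x \<in> D \<delta> i j \<and> y \<in> D \<delta> i j"
      using ij by auto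
  qed
next
  assume H: "\<forall>\<delta>>0. \<exists>i j. 1 \<le> i \<and> i \<le> K \<delta> \<and> j < m \<delta> i \<and> x \<in> D \<delta> i j \<and> y \<in> D \<delta> i j"
  show "cr_equiv S f x y"
    unfolding cr_equiv_def
  proof (intro conjI allI impI)
    fix \<delta> :: real assume dp: "\<delta> > 0"
    obtain i j where ij: "1 \<le> i" "i \<le> K \<delta>" "j < m \<delta> i" "x \<in> D \<delta> i j" "y \<in> D \<delta> i j"
      using H dp by blast
    obtain N1 where N1: "N1 > 0" "\<forall>n\<ge>N1. \<exists>c. dchain f \<delta> (CR S f) c (m \<delta> i * n) \<and> c 0 = x \<and> c (m \<delta> i * n) = y"
      using D3[OF dp ij(1-5)] by blast
    obtain N2 where N2: "N2 > 0" "\<forall>n\<ge>N2. \<exists>c. dchain f \<delta> (CR S f) c (m \<delta> i * n) \<and> c 0 = y \<and> c (m \<delta> i * n) = x"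
      using D3[OF dp ij(1-3,5,4)] by blast
    have "m \<delta> i > 0" using m_pos[OF dp ij(1,2)] by simp
    moreover have "max N1 N2 > 0" using N1 by simp
    moreover have "\<forall>n\<ge>max N1 N2. \<exists>cx cy.
        dchain f \<delta> (CR S f) cx (m \<delta> i * n) \<and> dchain f \<delta> (CR S f) cy (m \<delta> i * n) \<and>
        cx 0 = x \<and> cx (m \<delta> i * n) = y \<and> cy 0 = y \<and> cy (m \<delta> i * n) = x"
      using N1 N2 by (metis max.bounded_iff)
    ultimately show "\<exists>m>0. \<exists>N>0. \<forall>n\<ge>N. \<exists>cx cy.
        dchain f \<delta> (CR S f) cx (m * n) \<and> dchain f \<delta> (CR S f) cy (m * n) \<and>
        cx 0 = x \<and> cx (m * n) = y \<and> cy 0 = y \<and> cy (m * n) = x" by blast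
  qed (use \<open>x \<in> CR S f\<close> \<open>y \<in> CR S f\<close> in auto)
qed

end
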